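(* Under the hypotheses of the previous statement (i.e. $c>0$, $m+\frac d2>1$, $\phi_k$ a bounded real solution on $[-1,1]$ of $\big((1-\eta)(1+\eta)^{m+\frac d2}\phi_k'\big)'+\big(\alpha_k-\frac{c^2(1+\eta)}{8}\big)(1+\eta)^{m+\frac d2-1}\phi_k=0$ normalized by $\int_{-1}^1(1+t)^{m+\frac d2-1}|\phi_k(t)|^2dt=2^{m+\frac d2-1}$, and $\alpha_k>\frac{c^2}{4}$), we have $$\sup_{\eta\in[a_{m,d},1]}|\phi_k(\eta)|\le\frac{3\sqrt3}{2}\sqrt{2^{m+\frac d2+1}\big(m+\tfrac d2-1\big)}\;\alpha_k^{1/2},\qquad a_{m,d}=\frac{2m+d-2}{2m+d}.$$
   Context: This is the radial equation of ball prolate spheroidal wave functions $\psi(x)=r^m\phi_k(2r^2-1)Y(\hat x)$, where $\alpha_k=\frac14(\chi^{(m)}_k(c)-m(m+d))$ and $\chi^{(m)}_k(c)$ is the corresponding eigenvalue of $\mathcal{L}_c=-\nabla\cdot(1-\|x\|^2)\nabla-\Delta_0+c^2\|x\|^2$. *)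

theory Defs
  imports "HOL-Analysis.Analysis"
begin

end

theory Submission
  imports Defs
begin

lemma incr_lemma:
  fixes f f' :: "real \<Rightarrow> real"
  assumes "x \<le> y" "\<And>t. x \<le> t \<Longrightarrow> t \<le> y \<Longrightarrow> (f has_real_derivative f' t) (at t)"
    "\<And>t. x \<le> t \<Longrightarrow> t \<le> y \<Longrightarrow> f' t \<ge> 0"
  shows "f x \<le> f y"
proof (rule DERIV_nonneg_imp_increasing_open[OF assms(1)])
  show "\<exists>y. DERIV f t :> y \<and> 0 \<le> y" if "x < t" "t < y" for t
    using assms that by (meson less_imp_le)
  show "continuous_on {x..y} f"
    by (rule continuous_at_imp_continuous_on) (metis assms(2) atLeastAtMost_iff DERIV_isCont)
qed

lemma lip_lemma:
  fixes f f' :: "real \<Rightarrow> real"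
  assumes "x \<le> y" "continuous_on {x..y} f"
    "\<And>t. x < t \<Longrightarrow> t < y \<Longrightarrow> (f has_real_derivative f' t) (at t)"
    "\<And>t. x < t \<Longrightarrow> t < y \<Longrightarrow> \<bar>f' t\<bar> \<le> K"
  shows "\<bar>f y - f x\<bar> \<le> K * (y - x)"
proof (cases "x = y")
  case True thus ?thesis by simp
next
  case False
  hence lt: "x < y" using assms(1) by simp
  obtain l z where z: "x < z" "z < y" "DERIV f z :> l" "f y - f x = (y - x) * l"
    using MVT[OF lt assms(2)] assms(3) real_differentiable_def by meson
  have "l = f' z" using DERIV_unique z(3) assms(3)[OF z(1,2)] by blast
  hence "\<bar>l\<bar> \<le> K" using assms(4)[OF z(1,2)] by simp
  thus ?thesis using z(4) lt by (simp add: abs_mult mult_left_mono)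
qed

lemma bernoulli_powr:
  fixes x \<beta> :: real
  assumes "0 \<le> x" "x < 1" "\<beta> \<ge> 1"
  shows "1 - \<beta> * x \<le> (1 - x) powr \<beta>"
proof -
  have "(\<lambda>y. (1 - y) powr \<beta> + \<beta> * y) 0 \<le> (\<lambda>y. (1 - y) powr \<beta> + \<beta> * y) x"
  proof (rule incr_lemma[OF assms(1)])
    fix t assume t: "0 \<le> t" "t \<le> x"
    show "((\<lambda>y. (1 - y) powr \<beta> + \<beta> * y) has_real_derivative
       (- (\<beta> * (1 - t) powr (\<beta> - 1)) + \<beta>)) (at t)"
      using t assms by (auto intro!: derivative_eq_intros)
    have "(1 - t) powr (\<beta> - 1) \<le> 1"
      using t assms by (intro powr_le1) auto
    thus "0 \<le> - (\<beta> * (1 - t) powr (\<beta> - 1)) + \<beta>"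
      using assms mult_left_mono[of "(1 - t) powr (\<beta> - 1)" 1 \<beta>] by linarith
  qed
  thus ?thesis by simp
qed

lemma cont_from_deriv:
  fixes f f' :: "real \<Rightarrow> real"
  assumes "\<And>t. x \<le> t \<Longrightarrow> t \<le> y \<Longrightarrow> (f has_real_derivative f' t) (at t)"
  shows "continuous_on {x..y} f"
  by (rule continuous_at_imp_continuous_on) (metis assms atLeastAtMost_iff DERIV_isCont)

lemma GR_lemma:
  fixes \<phi> \<phi>' G g :: "real \<Rightarrow> real" and \<beta> K B0 \<eta> :: real
  assumes \<beta>: "\<beta> \<ge> 1" and \<eta>: "-1 < \<eta>" "\<eta> < 1" and K: "K \<ge> 0"
  and d\<phi>: "\<And>t. -1<t \<Longrightarrow> t<1 \<Longrightarrow> (\<phi> has_real_derivative \<phi>' t) (at t)"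
  and dG: "\<And>t. -1<t \<Longrightarrow> t<1 \<Longrightarrow> (G has_real_derivative g t) (at t)"
  and Gdef: "\<And>t. -1<t \<Longrightarrow> t<1 \<Longrightarrow> G t = (1-t)*(1+t) powr \<beta> * \<phi>' t"
  and gb: "\<And>t. \<eta> \<le> t \<Longrightarrow> t<1 \<Longrightarrow> \<bar>g t\<bar> \<le> K"
  and B0: "\<And>t. -1<t \<Longrightarrow> t<1 \<Longrightarrow> \<bar>\<phi> t\<bar> \<le> B0"
  shows "\<bar>G \<eta>\<bar> \<le> K*(1-\<eta>)"
proof (rule ccontr)
  assume nt: "\<not> \<bar>G \<eta>\<bar> \<le> K*(1-\<eta>)"
  define \<epsilon> where "\<epsilon> = \<bar>G \<eta>\<bar> - K*(1-\<eta>)"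
  have \<epsilon>: "\<epsilon> > 0" using nt by (simp add: \<epsilon>_def)
  have Gne: "G \<eta> \<noteq> 0" using nt K \<eta> by auto
  define s where "s = sgn (G \<eta>)"
  have s: "s * G \<eta> = \<bar>G \<eta>\<bar>" "\<bar>s\<bar> = 1" using Gne by (auto simp: s_def sgn_real_def)
  have sG: "s * G t \<ge> \<epsilon>" if t: "\<eta> \<le> t" "t < 1" for t
  proof -
    have "\<bar>G t - G \<eta>\<bar> \<le> K * (t - \<eta>)"
    proof (rule lip_lemma[OF t(1)])
      show "continuous_on {\<eta>..t} G" by (rule cont_from_deriv[of _ _ G g]) (use dG \<eta> t in auto)
      show "(G has_real_derivative g y) (at y)" if "\<eta> < y" "y < t" for y using dG that \<eta> t by auto
      show "\<bar>g y\<bar> \<le> K" if "\<eta> < y" "y < t" for y using gb that t by auto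
    qed
    moreover have "\<bar>s * (G t - G \<eta>)\<bar> = \<bar>G t - G \<eta>\<bar>" using s by (simp add: abs_mult)
    moreover have "K * (t - \<eta>) \<le> K * (1 - \<eta>)" using K t by (intro mult_left_mono) auto
    ultimately show ?thesis using s unfolding \<epsilon>_def by (smt (verit) right_diff_distrib)
  qed
  define k where "k = \<epsilon> / 2 powr \<beta>"
  have k: "k > 0" using \<epsilon> by (simp add: k_def)
  have s\<phi>': "s * \<phi>' t \<ge> k / (1 - t)" if t: "\<eta> \<le> t" "t < 1" for t
  proof -
    have pos: "1 - t > 0" "1 + t > 0" using t \<eta> by auto
    have "s * G t = (1-t)*(1+t) powr \<beta> * (s * \<phi>' t)" proof -
      have "G t = (1-t)*(1+t) powr \<beta> * \<phi>' t" using Gdef[of t] t \<eta> by simp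
      thus ?thesis by simp
    qed
    hence e1: "(1-t)*(1+t) powr \<beta> * (s * \<phi>' t) \<ge> \<epsilon>" using sG[OF t] by linarith
    hence nn: "s * \<phi>' t > 0" using \<epsilon> pos by (smt (verit) mult_pos_pos mult_nonneg_nonpos powr_gt_zero)
    have "(1+t) powr \<beta> \<le> 2 powr \<beta>" using pos t \<beta> by (intro powr_mono2) auto
    hence "(1-t)*(1+t) powr \<beta> * (s * \<phi>' t) \<le> (1-t)*2 powr \<beta> * (s * \<phi>' t)"
      using pos nn by (intro mult_right_mono mult_left_mono) auto
    hence "\<epsilon> \<le> (1-t) * (2 powr \<beta> * (s * \<phi>' t))" using e1 by simp
    hence "\<epsilon> / 2 powr \<beta> \<le> (1-t) * (s * \<phi>' t)" by (simp add: field_simps)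
    thus ?thesis using pos by (simp add: k_def field_simps)
  qed
  have B0nn: "B0 \<ge> 0" using B0[OF \<eta>] by linarith
  define X where "X = (2*B0+1)/k"
  have X: "X > 0" using k B0nn by (simp add: X_def)
  define t1 where "t1 = 1 - (1-\<eta>)*exp(-X)"
  have ex: "exp (-X) \<le> 1" "exp (-X) > 0" using X by auto
  have t1: "\<eta> \<le> t1" "t1 < 1" using ex \<eta> unfolding t1_def
    by (smt (verit) mult_left_le mult_pos_pos)+
  have "(\<lambda>y. s * \<phi> y + k * ln (1 - y)) \<eta> \<le> (\<lambda>y. s * \<phi> y + k * ln (1 - y)) t1"
  proof (rule incr_lemma[OF t1(1)])
    fix t assume t: "\<eta> \<le> t" "t \<le> t1"
    show "((\<lambda>y. s * \<phi> y + k * ln (1 - y)) has_real_derivative (s * \<phi>' t + k * (- 1 / (1 - t)))) (at t)"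
      using t t1 \<eta> d\<phi>[of t] by (auto intro!: derivative_eq_intros)
    show "0 \<le> s * \<phi>' t + k * (- 1 / (1 - t))" using s\<phi>'[of t] t t1 by (simp add: field_simps)
  qed
  moreover have "ln (1 - t1) = ln (1 - \<eta>) - X" using \<eta> ex
    by (simp add: t1_def ln_mult)
  ultimately have "s * \<phi> t1 \<ge> s * \<phi> \<eta> + k * X" by (simp add: algebra_simps)
  moreover have "k * X = 2*B0+1" using k by (simp add: X_def)
  moreover have "\<bar>s * \<phi> \<eta>\<bar> \<le> B0" "\<bar>s * \<phi> t1\<bar> \<le> B0"
    using s B0[OF \<eta>] B0[of t1] t1 \<eta> by (auto simp: abs_mult)
  ultimately show False by linarith
qed

lemma GL_lemma:
  fixes \<phi> \<phi>' G g :: "real \<Rightarrow> real" and \<beta> K B0 \<eta> :: real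
  assumes \<beta>: "\<beta> \<ge> 1" and \<eta>: "-1 < \<eta>" "\<eta> < 1" and K: "K \<ge> 0"
  and d\<phi>: "\<And>t. -1<t \<Longrightarrow> t<1 \<Longrightarrow> (\<phi> has_real_derivative \<phi>' t) (at t)"
  and dG: "\<And>t. -1<t \<Longrightarrow> t<1 \<Longrightarrow> (G has_real_derivative g t) (at t)"
  and Gdef: "\<And>t. -1<t \<Longrightarrow> t<1 \<Longrightarrow> G t = (1-t)*(1+t) powr \<beta> * \<phi>' t"
  and gb: "\<And>t. -1 < t \<Longrightarrow> t \<le> \<eta> \<Longrightarrow> \<bar>g t\<bar> \<le> K * (1+t) powr (\<beta>-1)"
  and B0: "\<And>t. -1<t \<Longrightarrow> t<1 \<Longrightarrow> \<bar>\<phi> t\<bar> \<le> B0"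
  shows "\<bar>G \<eta>\<bar> \<le> K*(1+\<eta>) powr \<beta> / \<beta>"
proof (rule ccontr)
  define W where "W t = (1+t) powr \<beta> / \<beta>" for t
  assume nt: "\<not> \<bar>G \<eta>\<bar> \<le> K*(1+\<eta>) powr \<beta> / \<beta>"
  define \<epsilon> where "\<epsilon> = \<bar>G \<eta>\<bar> - K*W \<eta>"
  have \<epsilon>: "\<epsilon> > 0" using nt by (simp add: \<epsilon>_def W_def)
  have Gne: "G \<eta> \<noteq> 0" using nt K \<eta> \<beta> by auto
  define s where "s = sgn (G \<eta>)"
  have s: "s * G \<eta> = \<bar>G \<eta>\<bar>" "\<bar>s\<bar> = 1" using Gne by (auto simp: s_def sgn_real_def)
  have dW: "(W has_real_derivative (1+t) powr (\<beta>-1)) (at t)" if "-1 < t" for t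
    using that \<beta> unfolding W_def by (auto intro!: derivative_eq_intros)
  have sG: "s * G t \<ge> \<epsilon>" if t: "-1 < t" "t \<le> \<eta>" for t
  proof -
    have "(\<lambda>y. \<sigma> * G y + K * W y) t \<le> (\<lambda>y. \<sigma> * G y + K * W y) \<eta>" if \<sigma>: "\<bar>\<sigma>\<bar> = 1" for \<sigma>
    proof (rule incr_lemma[OF t(2)])
      fix y assume y: "t \<le> y" "y \<le> \<eta>"
      show "((\<lambda>y. \<sigma> * G y + K * W y) has_real_derivative \<sigma> * g y + K * (1+y) powr (\<beta>-1)) (at y)"
        using dG[of y] dW[of y] y t \<eta> by (auto intro!: derivative_eq_intros)
      have "\<bar>\<sigma> * g y\<bar> \<le> K * (1+y) powr (\<beta>-1)" using gb[of y] y t \<sigma> by (simp add: abs_mult)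
      thus "0 \<le> \<sigma> * g y + K * (1+y) powr (\<beta>-1)" by linarith
    qed
    from this[of 1] this[of "-1"] have "\<bar>G t - G \<eta>\<bar> \<le> K * (W \<eta> - W t)" by (simp add: algebra_simps)
    moreover have "\<bar>s * (G t - G \<eta>)\<bar> = \<bar>G t - G \<eta>\<bar>" using s by (simp add: abs_mult)
    moreover have "K * W t \<ge> 0" using K t \<beta> by (simp add: W_def)
    ultimately show ?thesis using s unfolding \<epsilon>_def by (smt (verit) right_diff_distrib)
  qed
  define t0 where "t0 = min \<eta> 0"
  have t0: "-1 < t0" "t0 \<le> \<eta>" "t0 \<le> 0" using \<eta> by (auto simp: t0_def)
  define k where "k = \<epsilon> / 2"
  have k: "k > 0" using \<epsilon> by (simp add: k_def)
  have s\<phi>': "s * \<phi>' t \<ge> k / (1 + t)" if t: "-1 < t" "t \<le> t0" for t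
  proof -
    have pos: "1 - t > 0" "1 + t > 0" using t t0 \<eta> by auto
    have "s * G t = (1-t)*(1+t) powr \<beta> * (s * \<phi>' t)"
    proof -
      have "G t = (1-t)*(1+t) powr \<beta> * \<phi>' t" using Gdef[of t] t t0 \<eta> by simp
      thus ?thesis by simp
    qed
    hence e1: "(1-t)*(1+t) powr \<beta> * (s * \<phi>' t) \<ge> \<epsilon>" using sG[of t] t t0 by linarith
    hence nn: "s * \<phi>' t > 0" using \<epsilon> pos by (smt (verit) mult_pos_pos mult_nonneg_nonpos powr_gt_zero)
    have "(1+t) powr \<beta> \<le> (1+t)" using pos t t0 \<beta> by (intro powr_le_one_le) auto
    hence "(1-t)*(1+t) powr \<beta> \<le> 2 * (1+t)" using pos t t0
      mult_mono[of "1-t" 2 "(1+t) powr \<beta>" "1+t"] by simp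
    hence "(1-t)*(1+t) powr \<beta> * (s * \<phi>' t) \<le> 2 * (1+t) * (s * \<phi>' t)"
      using nn by (intro mult_right_mono) auto
    hence "\<epsilon> \<le> 2 * ((1+t) * (s * \<phi>' t))" using e1 by (simp only: mult.assoc)
    hence "\<epsilon> / 2 \<le> (1+t) * (s * \<phi>' t)" by (simp add: field_simps)
    thus ?thesis using pos by (simp add: k_def field_simps)
  qed
  have B0nn: "B0 \<ge> 0" using B0[OF \<eta>] by linarith
  define X where "X = (2*B0+1)/k"
  have X: "X > 0" using k B0nn by (simp add: X_def)
  define t1 where "t1 = -1 + (1+t0)*exp(-X)"
  have ex: "exp (-X) \<le> 1" "exp (-X) > 0" using X by auto
  have t1: "-1 < t1" "t1 \<le> t0" using ex t0 unfolding t1_def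
    by (smt (verit) mult_left_le mult_pos_pos)+
  have "(\<lambda>y. s * \<phi> y - k * ln (1 + y)) t1 \<le> (\<lambda>y. s * \<phi> y - k * ln (1 + y)) t0"
  proof (rule incr_lemma[OF t1(2)])
    fix t assume t: "t1 \<le> t" "t \<le> t0"
    show "((\<lambda>y. s * \<phi> y - k * ln (1 + y)) has_real_derivative (s * \<phi>' t - k * (1 / (1 + t)))) (at t)"
      using t t1 t0 \<eta> d\<phi>[of t] by (auto intro!: derivative_eq_intros)
    show "0 \<le> s * \<phi>' t - k * (1 / (1 + t))" using s\<phi>'[of t] t t1 by (simp add: field_simps)
  qed
  moreover have "ln (1 + t1) = ln (1 + t0) - X" using t0 ex
    by (simp add: t1_def ln_mult)
  ultimately have "s * \<phi> t1 \<le> s * \<phi> t0 - k * X" by (simp add: algebra_simps)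
  moreover have "k * X = 2*B0+1" using k by (simp add: X_def)
  moreover have "\<bar>s * \<phi> t0\<bar> \<le> B0" "\<bar>s * \<phi> t1\<bar> \<le> B0"
    using s B0[of t0] B0[of t1] t1 t0 \<eta> by (auto simp: abs_mult)
  ultimately show False by linarith
qed

theorem proposition3p8:
  fixes m d :: nat and c \<alpha> :: real and \<phi> \<phi>' :: "real \<Rightarrow> real"
  assumes d_pos: "d \<ge> 1"
    and c_pos: "c > 0"
    and beta_gt: "real m + real d / 2 > 1"
    and bounded: "bounded (\<phi> ` {-1..1})"
    and cont: "continuous_on {-1..1} \<phi>"
    and deriv1: "\<forall>\<eta>\<in>{-1<..<1}. (\<phi> has_real_derivative \<phi>' \<eta>) (at \<eta>)"
    and ode: "\<forall>\<eta>\<in>{-1<..<1}.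
       ((\<lambda>t. (1 - t) * (1 + t) powr (real m + real d / 2) * \<phi>' t) has_real_derivative
          (- ((\<alpha> - c\<^sup>2 * (1 + \<eta>) / 8) * (1 + \<eta>) powr (real m + real d / 2 - 1) * \<phi> \<eta>))) (at \<eta>)"
    and norm: "((\<lambda>t. (1 + t) powr (real m + real d / 2 - 1) * \<bar>\<phi> t\<bar>\<^sup>2) has_integral
                 2 powr (real m + real d / 2 - 1)) {-1..1}"
    and alpha_gt: "\<alpha> > c\<^sup>2 / 4"
  shows "\<forall>\<eta>\<in>{(2 * real m + real d - 2) / (2 * real m + real d)..1}.
           \<bar>\<phi> \<eta>\<bar> \<le> (3 * sqrt 3 / 2) * sqrt (2 powr (real m + real d / 2 + 1) * (real m + real d / 2 - 1)) * \<alpha> powr (1/2)"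
proof -
  define \<beta> where "\<beta> = real m + real d / 2"
  have "real (2*m+d) > 2" using beta_gt by simp
  hence "2*m+d > 2" by simp
  hence "real (2*m+d) \<ge> 3" by simp
  hence \<beta>32: "\<beta> \<ge> 3/2" by (simp add: \<beta>_def)
  hence \<beta>1: "\<beta> \<ge> 1" by simp
  define a where "a = 1 - 1/\<beta>"
  have a_eq: "(2 * real m + real d - 2) / (2 * real m + real d) = a"
    using \<beta>32 by (simp add: a_def \<beta>_def field_simps)
  have a0: "0 \<le> a" "a < 1" using \<beta>32 by (auto simp: a_def field_simps)
  have \<alpha>0: "\<alpha> > 0" using alpha_gt c_pos by (smt (verit) zero_less_power divide_pos_pos)
  define q where "q = (\<lambda>t. \<alpha> - c\<^sup>2 * (1 + t) / 8)"
  define w where "w = (\<lambda>t::real. (1 + t) powr (\<beta> - 1))"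
  define G where "G = (\<lambda>t. (1 - t) * (1 + t) powr \<beta> * \<phi>' t)"
  define g where "g = (\<lambda>t. - (q t * w t * \<phi> t))"
  have q: "0 < q t" "q t \<le> \<alpha>" if "-1 < t" "t < 1" for t
  proof -
    have "c\<^sup>2 * (1 + t) \<le> c\<^sup>2 * 2" using that by (intro mult_left_mono) auto
    thus "0 < q t" using alpha_gt by (simp add: q_def)
    show "q t \<le> \<alpha>" using that by (simp add: q_def)
  qed
  have w: "0 < w t" "w t \<le> 2 powr (\<beta> - 1)" if "-1 < t" "t < 1" for t
    using that \<beta>1 by (auto simp: w_def intro!: powr_mono2)
  have d\<phi>: "(\<phi> has_real_derivative \<phi>' t) (at t)" if "-1 < t" "t < 1" for t
    using deriv1 that by auto
  have dG: "(G has_real_derivative g t) (at t)" if "-1 < t" "t < 1" for t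
    using ode[folded \<beta>_def] that by (auto simp: G_def g_def q_def w_def)
  have Gdef: "G t = (1-t)*(1+t) powr \<beta> * \<phi>' t" for t by (simp add: G_def)
  obtain B0 where B0': "\<forall>x\<in>\<phi> ` {-1..1}. norm x \<le> B0" using bounded bounded_iff by blast
  have B0: "\<bar>\<phi> t\<bar> \<le> B0" if "-1 < t" "t < 1" for t using B0' that by auto
  have gb: "\<bar>g t\<bar> \<le> \<alpha> * B * w t" if "-1 < t" "t < 1" "\<bar>\<phi> t\<bar> \<le> B" for t B
  proof -
    have "\<bar>g t\<bar> = q t * w t * \<bar>\<phi> t\<bar>" using q[OF that(1,2)] w[OF that(1,2)] by (simp add: g_def abs_mult)
    also have "\<dots> \<le> \<alpha> * w t * B" using q[OF that(1,2)] w[OF that(1,2)] that(3)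
      by (intro mult_mono) auto
    finally show ?thesis by (simp add: mult_ac)
  qed
  have GRb: "\<bar>G t\<bar> \<le> \<alpha> * B * 2 powr (\<beta> - 1) * (1 - t)"
    if t: "-1 < t" "t < 1" and B: "\<And>s. t \<le> s \<Longrightarrow> s < 1 \<Longrightarrow> \<bar>\<phi> s\<bar> \<le> B" for t B
  proof (rule GR_lemma[OF \<beta>1 t _ d\<phi> dG Gdef _ B0])
    have "B \<ge> 0" using B[of t] t by linarith
    thus "0 \<le> \<alpha> * B * 2 powr (\<beta> - 1)" using \<alpha>0 by simp
    fix s assume s: "t \<le> s" "s < 1"
    have "\<bar>g s\<bar> \<le> \<alpha> * B * w s" using gb[of s B] B[OF s] s t by simp
    also have "\<dots> \<le> \<alpha> * B * 2 powr (\<beta> - 1)" using w[of s] s t \<open>B \<ge> 0\<close> \<alpha>0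
      by (intro mult_left_mono) auto
    finally show "\<bar>g s\<bar> \<le> \<alpha> * B * 2 powr (\<beta> - 1)" .
  qed auto
  have GLb: "\<bar>G t\<bar> \<le> \<alpha> * B * (1 + t) powr \<beta> / \<beta>"
    if t: "-1 < t" "t < 1" and B: "\<And>s. -1 < s \<Longrightarrow> s < 1 \<Longrightarrow> \<bar>\<phi> s\<bar> \<le> B" for t B
  proof (rule GL_lemma[OF \<beta>1 t _ d\<phi> dG Gdef _ B0])
    have "B \<ge> 0" using B[of t] t by linarith
    thus "0 \<le> \<alpha> * B" using \<alpha>0 by simp
    fix s assume s: "-1 < s" "s \<le> t"
    show "\<bar>g s\<bar> \<le> \<alpha> * B * (1 + s) powr (\<beta> - 1)" using gb[of s B] B[of s] s t by (simp add: w_def)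
  qed auto
  have pow_lb: "(1 + t) powr \<beta> \<ge> 2 powr (\<beta> - 1)" if "a \<le> t" for t
  proof -
    define x where "x = 1 / (2 * \<beta>)"
    have x: "0 \<le> x" "x < 1" using \<beta>32 by (auto simp: x_def field_simps)
    have "1 + a = 2 * (1 - x)" using \<beta>32 by (simp add: a_def x_def field_simps)
    hence "(1 + a) powr \<beta> = 2 powr \<beta> * (1 - x) powr \<beta>" using x powr_mult[of 2 "1 - x" \<beta>] by simp
    also have "\<dots> \<ge> 2 powr \<beta> * (1 - \<beta> * x)" using bernoulli_powr[OF x \<beta>1] by simp
    also have "2 powr \<beta> * (1 - \<beta> * x) = 2 powr (\<beta> - 1)" using \<beta>32
      by (simp add: x_def powr_diff)
    finally have "2 powr (\<beta> - 1) \<le> (1 + a) powr \<beta>" .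
    also have "\<dots> \<le> (1 + t) powr \<beta>" using that a0 \<beta>1 by (intro powr_mono2) auto
    finally show ?thesis .
  qed
  have dR: "\<bar>\<phi>' t\<bar> \<le> \<alpha> * B" if t: "a \<le> t" "t < 1" and B: "\<And>s. t \<le> s \<Longrightarrow> s < 1 \<Longrightarrow> \<bar>\<phi> s\<bar> \<le> B" for t B
  proof -
    have t1: "-1 < t" using t a0 by simp
    have "B \<ge> 0" using B[of t] t by linarith
    have P: "(1 + t) powr \<beta> > 0" using t1 by simp
    have "(1 - t) * ((1 + t) powr \<beta> * \<bar>\<phi>' t\<bar>) \<le> (1 - t) * (\<alpha> * B * 2 powr (\<beta> - 1))"
      using GRb[OF t1 t(2) B] t1 t by (simp add: Gdef abs_mult algebra_simps)
    hence "(1 + t) powr \<beta> * \<bar>\<phi>' t\<bar> \<le> \<alpha> * B * 2 powr (\<beta> - 1)" using t by simp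
    moreover have "2 powr (\<beta> - 1) * \<bar>\<phi>' t\<bar> \<le> (1 + t) powr \<beta> * \<bar>\<phi>' t\<bar>"
      using pow_lb[OF t(1)] by (intro mult_right_mono) auto
    ultimately have "2 powr (\<beta> - 1) * \<bar>\<phi>' t\<bar> \<le> \<alpha> * B * 2 powr (\<beta> - 1)" by linarith
    hence "2 powr (\<beta> - 1) * \<bar>\<phi>' t\<bar> \<le> 2 powr (\<beta> - 1) * (\<alpha> * B)" by (simp add: mult_ac)
    thus ?thesis by (simp add: mult_le_cancel_left_pos)
  qed
  have contabs: "continuous_on {-1..1} (\<lambda>t. \<bar>\<phi> t\<bar>)" using cont by (intro continuous_intros)
  obtain \<eta>0 where \<eta>0: "\<eta>0 \<in> {-1..1}" "\<And>y. y \<in> {-1..1} \<Longrightarrow> \<bar>\<phi> y\<bar> \<le> \<bar>\<phi> \<eta>0\<bar>"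
    using continuous_attains_sup[OF compact_Icc _ contabs] by auto
  define N where "N = \<bar>\<phi> \<eta>0\<bar>"
  have Nb: "\<bar>\<phi> y\<bar> \<le> N" if "-1 \<le> y" "y \<le> 1" for y using \<eta>0 that by (simp add: N_def)
  have dN: "\<bar>\<phi>' t\<bar> \<le> \<alpha> * N" if t: "-1 < t" "t < 1" for t
  proof (cases "a \<le> t")
    case True thus ?thesis using dR[of t N] Nb t by auto
  next
    case False
    have P: "(1 + t) powr \<beta> > 0" using t by simp
    have "(1 + t) powr \<beta> * ((1 - t) * \<bar>\<phi>' t\<bar>) \<le> (1 + t) powr \<beta> * (\<alpha> * N / \<beta>)"
      using GLb[OF t, of N] Nb t by (simp add: Gdef abs_mult algebra_simps)
    hence "(1 + t) powr \<beta> * ((1 - t) * \<bar>\<phi>' t\<bar>) \<le> (1 + t) powr \<beta> * (\<alpha> * N / \<beta>)" by simp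
    hence "(1 - t) * \<bar>\<phi>' t\<bar> \<le> \<alpha> * N / \<beta>" using P by (simp only: mult_le_cancel_left_pos)
    hence "\<beta> * ((1 - t) * \<bar>\<phi>' t\<bar>) \<le> \<alpha> * N" using \<beta>1 by (simp add: field_simps)
    moreover have "\<beta> * (1 - t) \<ge> 1" using False \<beta>1 by (simp add: a_def field_simps)
    hence "\<bar>\<phi>' t\<bar> \<le> \<beta> * (1 - t) * \<bar>\<phi>' t\<bar>" by (simp add: mult_le_cancel_right1)
    ultimately show ?thesis by (simp add: algebra_simps)
  qed
  have lip: "\<bar>\<phi> y - \<phi> x\<bar> \<le> K * \<bar>y - x\<bar>"
    if xy: "lo \<le> x" "x \<le> hi" "lo \<le> y" "y \<le> hi" and lohi: "-1 \<le> lo" "hi \<le> 1"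
      and K: "\<And>t. lo < t \<Longrightarrow> t < hi \<Longrightarrow> \<bar>\<phi>' t\<bar> \<le> K" for x y lo hi K
  proof -
    have gen: "\<bar>\<phi> v - \<phi> u\<bar> \<le> K * (v - u)" if uv: "lo \<le> u" "u \<le> v" "v \<le> hi" for u v
    proof (rule lip_lemma[OF uv(2)])
      show "continuous_on {u..v} \<phi>" by (rule continuous_on_subset[OF cont]) (use uv lohi in auto)
      show "(\<phi> has_real_derivative \<phi>' t) (at t)" if "u < t" "t < v" for t using d\<phi> that uv lohi by auto
      show "\<bar>\<phi>' t\<bar> \<le> K" if "u < t" "t < v" for t using K that uv by auto
    qed
    show ?thesis
    proof (cases "x \<le> y")
      case True thus ?thesis using gen[of x y] xy by simp
    next
      case False thus ?thesis using gen[of y x] xy by (simp add: abs_minus_commute)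
    qed
  qed

  have lipN: "\<bar>\<phi> y - \<phi> x\<bar> \<le> \<alpha> * N * \<bar>y - x\<bar>" if "-1 \<le> x" "x \<le> 1" "-1 \<le> y" "y \<le> 1" for x y
    using lip[of "-1" x 1 y "\<alpha> * N"] that dN by auto
  have Nnn: "N \<ge> 0" by (simp add: N_def)
  have half: "\<alpha> \<ge> 1/2" if Npos: "N > 0"
  proof -
    have "\<exists>\<eta>1. -1 < \<eta>1 \<and> \<eta>1 < 1 \<and> \<phi> \<eta>1 * \<phi> \<eta>0 \<le> 0"
    proof (rule ccontr)
      assume nc: "\<not> (\<exists>\<eta>1. -1 < \<eta>1 \<and> \<eta>1 < 1 \<and> \<phi> \<eta>1 * \<phi> \<eta>0 \<le> 0)"
      have pos: "\<phi> t * \<phi> \<eta>0 > 0" if "-1<t" "t<1" for t using that nc by force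
      define H where "H = (\<lambda>t. \<phi> \<eta>0 * G t)"
      have dH: "(H has_real_derivative \<phi> \<eta>0 * g t) (at t)" if "-1<t" "t<1" for t
        unfolding H_def using DERIV_cmult[OF dG[OF that]] by simp
      have gneg: "\<phi> \<eta>0 * g t < 0" if "-1<t" "t<1" for t
      proof -
        have "\<phi> \<eta>0 * g t = -(q t * w t * (\<phi> t * \<phi> \<eta>0))" by (simp add: g_def algebra_simps)
        moreover have "q t * w t * (\<phi> t * \<phi> \<eta>0) > 0" using q[OF that] w[OF that] pos[OF that] by simp
        ultimately show ?thesis by simp
      qed
      have Hdec: "H y \<le> H x" if xy: "-1<x" "x \<le> y" "y<1" for x y
      proof -
        have "(\<lambda>t. - H t) x \<le> (\<lambda>t. - H t) y"
        proof (rule incr_lemma[OF xy(2)])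
          fix t assume t: "x \<le> t" "t \<le> y"
          show "((\<lambda>t. - H t) has_real_derivative - (\<phi> \<eta>0 * g t)) (at t)"
            using DERIV_minus[OF dH[of t]] t xy by simp
          show "0 \<le> - (\<phi> \<eta>0 * g t)" using gneg[of t] t xy by simp
        qed
        thus ?thesis by simp
      qed
      have Hstrict: "H (-1/2) > H 0"
        by (rule DERIV_neg_imp_decreasing[of "-1/2" 0 H]) (use dH gneg in force)+
      have H1: "H (-1/2) \<le> 0"
      proof (rule field_le_epsilon)
        fix e :: real assume e: "0 < e"
        define X where "X = N * (\<alpha> * N)"
        have X: "X \<ge> 0" using Nnn \<alpha>0 by (simp add: X_def)
        define \<delta> where "\<delta> = min (1/2) (e / (X + 1))"
        have \<delta>: "0 < \<delta>" "\<delta> \<le> 1/2" "\<delta> \<le> e / (X + 1)"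
        proof -
          have "0 < e / (X + 1)" using e X by simp
          thus "0 < \<delta>" unfolding \<delta>_def by simp
          show "\<delta> \<le> 1/2" unfolding \<delta>_def by (rule min.cobounded1)
          show "\<delta> \<le> e / (X + 1)" unfolding \<delta>_def by (rule min.cobounded2)
        qed
        have "\<delta> * X \<le> e / (X + 1) * X" using \<delta> X by (intro mult_right_mono) auto
        also have "\<dots> \<le> e" using e X by (simp add: field_simps)
        finally have \<delta>X: "\<delta> * X \<le> e" .
        define t where "t = -1 + \<delta>"
        have t: "-1 < t" "t \<le> -1/2" using \<delta> by (auto simp: t_def)
        have "\<bar>G t\<bar> \<le> \<alpha> * N * (1 + t) powr \<beta> / \<beta>" using GLb[of t N] t Nb by auto
        also have "\<dots> \<le> \<alpha> * N * (1 + t) powr \<beta>"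
        proof -
          have "0 \<le> \<alpha> * N * (1 + t) powr \<beta>" using \<alpha>0 Nnn by simp
          thus ?thesis using \<beta>1 by (simp add: divide_le_eq mult_le_cancel_left1)
        qed
        also have "(1 + t) powr \<beta> \<le> \<delta>" using \<delta> \<beta>1 powr_le_one_le[of \<delta> \<beta>] by (simp add: t_def)
        hence "\<alpha> * N * (1 + t) powr \<beta> \<le> \<alpha> * N * \<delta>" using \<alpha>0 Nnn by (intro mult_left_mono) auto
        finally have "\<bar>G t\<bar> \<le> \<alpha> * N * \<delta>" .
        hence "\<bar>H t\<bar> \<le> N * (\<alpha> * N * \<delta>)" using Nnn by (simp add: H_def abs_mult N_def mult_left_mono)
        hence "H t \<le> e" using \<delta>X by (simp add: X_def mult_ac)
        moreover have "H (-1/2) \<le> H t" using Hdec[of t "-1/2"] t by simp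
        ultimately show "H (-1/2) \<le> 0 + e" by simp
      qed
      have H2: "- H 0 \<le> 0"
      proof (rule field_le_epsilon)
        fix e :: real assume e: "0 < e"
        define X where "X = N * (\<alpha> * N * 2 powr (\<beta> - 1))"
        have X: "X \<ge> 0" using Nnn \<alpha>0 by (simp add: X_def)
        define \<delta> where "\<delta> = min (1/2) (e / (X + 1))"
        have \<delta>: "0 < \<delta>" "\<delta> \<le> 1/2" "\<delta> \<le> e / (X + 1)"
        proof -
          have "0 < e / (X + 1)" using e X by simp
          thus "0 < \<delta>" unfolding \<delta>_def by simp
          show "\<delta> \<le> 1/2" unfolding \<delta>_def by (rule min.cobounded1)
          show "\<delta> \<le> e / (X + 1)" unfolding \<delta>_def by (rule min.cobounded2)
        qed
        have "\<delta> * X \<le> e / (X + 1) * X" using \<delta> X by (intro mult_right_mono) auto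
        also have "\<dots> \<le> e" using e X by (simp add: field_simps)
        finally have \<delta>X: "\<delta> * X \<le> e" .
        define t where "t = 1 - \<delta>"
        have t: "0 \<le> t" "t < 1" using \<delta> by (auto simp: t_def)
        have "\<bar>G t\<bar> \<le> \<alpha> * N * 2 powr (\<beta> - 1) * (1 - t)" using GRb[of t N] t Nb by auto
        hence "\<bar>H t\<bar> \<le> N * (\<alpha> * N * 2 powr (\<beta> - 1) * \<delta>)" using Nnn
          by (simp add: H_def abs_mult N_def mult_left_mono t_def)
        hence "- H t \<le> e" using \<delta>X by (simp add: X_def mult_ac)
        moreover have "H t \<le> H 0" using Hdec[of 0 t] t by simp
        ultimately show "- H 0 \<le> 0 + e" by simp
      qed
      show False using H1 H2 Hstrict by simp
    qed
    then obtain \<eta>1 where \<eta>1: "-1 < \<eta>1" "\<eta>1 < 1" "\<phi> \<eta>1 * \<phi> \<eta>0 \<le> 0" by blast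
    have "N \<le> \<bar>\<phi> \<eta>0 - \<phi> \<eta>1\<bar>" unfolding N_def using \<eta>1(3)
      by (smt (verit) mult_pos_pos mult_neg_neg)
    also have "\<dots> \<le> \<alpha> * N * \<bar>\<eta>0 - \<eta>1\<bar>" using lipN[of \<eta>1 \<eta>0] \<eta>0 \<eta>1 by auto
    also have "\<dots> \<le> \<alpha> * N * 2" using \<eta>0 \<eta>1 \<alpha>0 Nnn by (intro mult_left_mono) auto
    finally have "N * 1 \<le> N * (2 * \<alpha>)" by (simp add: mult_ac)
    hence "1 \<le> 2 * \<alpha>" using Npos by (simp only: mult_le_cancel_left_pos)
    thus ?thesis by simp
  qed

  have contabsa: "continuous_on {a..1} (\<lambda>t. \<bar>\<phi> t\<bar>)"
    by (rule continuous_on_subset[OF contabs]) (use a0 in auto)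
  obtain \<eta>s where \<eta>s: "\<eta>s \<in> {a..1}" "\<And>y. y \<in> {a..1} \<Longrightarrow> \<bar>\<phi> y\<bar> \<le> \<bar>\<phi> \<eta>s\<bar>"
    using continuous_attains_sup[OF compact_Icc _ contabsa] a0 by auto
  define M where "M = \<bar>\<phi> \<eta>s\<bar>"
  have Mb: "\<bar>\<phi> y\<bar> \<le> M" if "a \<le> y" "y \<le> 1" for y using \<eta>s that by (simp add: M_def)
  have Mnn: "M \<ge> 0" by (simp add: M_def)
  define P where "P = 2 powr (\<beta> - 1)"
  have Ppos: "P > 0" by (simp add: P_def)
  define R where "R = (3 * sqrt 3 / 2) * sqrt (2 powr (\<beta> + 1) * (\<beta> - 1)) * \<alpha> powr (1/2)"
  have R0: "R \<ge> 0" using \<beta>32 \<alpha>0 by (simp add: R_def)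
  have R2: "R\<^sup>2 = 27 * (\<beta> - 1) * \<alpha> * P"
  proof -
    have e1: "2 powr (\<beta> + 1) = 4 * P"
    proof -
      have "2 powr (\<beta> + 1) = 2 powr ((\<beta> - 1) + 2)" by (simp add: add.commute)
      also have "\<dots> = P * 2 powr 2" unfolding P_def by (rule powr_add)
      finally show ?thesis by simp
    qed
    have "R = (3 * sqrt 3 / 2) * sqrt (4 * P * (\<beta> - 1)) * sqrt \<alpha>"
      using \<alpha>0 by (simp add: R_def e1 powr_half_sqrt)
    moreover have "3 * sqrt 3 / 2 = sqrt (27/4)"
      by (rule real_sqrt_unique[symmetric]) (auto simp: power_mult_distrib power_divide)
    ultimately have "R = sqrt (27/4) * sqrt (4 * P * (\<beta> - 1)) * sqrt \<alpha>" by (simp only:)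
    hence "R = sqrt (27/4 * (4 * P * (\<beta> - 1)) * \<alpha>)" by (simp only: real_sqrt_mult)
    moreover have "0 \<le> 27/4 * (4 * P * (\<beta> - 1)) * \<alpha>" using \<alpha>0 Ppos \<beta>32 by simp
    ultimately have "R\<^sup>2 = 27/4 * (4 * P * (\<beta> - 1)) * \<alpha>" by simp
    thus ?thesis by simp
  qed
  have MR: "M \<le> R"
  proof (cases "M = 0")
    case True thus ?thesis using R0 by simp
  next
    case False
    hence Mpos: "M > 0" using Mnn by simp
    have "M \<le> N" using Nb[of \<eta>s] \<eta>s a0 by (simp add: M_def)
    hence \<alpha>h: "\<alpha> \<ge> 1/2" using half Mpos by simp
    have dM: "\<bar>\<phi>' t\<bar> \<le> \<alpha> * M" if "a < t" "t < 1" for t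
      using dR[of t M] Mb that by auto
    have lipM: "\<bar>\<phi> y - \<phi> x\<bar> \<le> \<alpha> * M * \<bar>y - x\<bar>" if "a \<le> x" "x \<le> 1" "a \<le> y" "y \<le> 1" for x y
      using lip[of a x 1 y "\<alpha> * M"] that dM a0 by auto
    define ll where "ll = min (1 / (2 * \<beta>)) (1 / (3 * \<alpha>))"
    have ll: "0 < ll" "ll \<le> 1 / (2 * \<beta>)" "ll \<le> 1 / (3 * \<alpha>)"
    proof -
      show "0 < ll" unfolding ll_def using \<alpha>0 \<beta>1 by simp
      show "ll \<le> 1 / (2 * \<beta>)" unfolding ll_def by (rule min.cobounded1)
      show "ll \<le> 1 / (3 * \<alpha>)" unfolding ll_def by (rule min.cobounded2)
    qed
    have \<alpha>ll: "\<alpha> * ll \<le> 1/3" using ll(3) \<alpha>0 by (simp add: field_simps)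
    have lla: "2 * ll \<le> 1 - a" using ll(2) \<beta>1 by (simp add: a_def field_simps)
    obtain u v where uv: "a \<le> u" "v \<le> 1" "v - u = ll" "\<And>t. u \<le> t \<Longrightarrow> t \<le> v \<Longrightarrow> \<bar>t - \<eta>s\<bar> \<le> ll"
    proof (cases "\<eta>s + ll \<le> 1")
      case True
      show ?thesis by (rule that[of \<eta>s "\<eta>s + ll"]) (use True \<eta>s in auto)
    next
      case False
      show ?thesis by (rule that[of "\<eta>s - ll" \<eta>s]) (use False \<eta>s lla in auto)
    qed
    define F where "F = (\<lambda>t. (1 + t) powr (\<beta> - 1) * \<bar>\<phi> t\<bar>\<^sup>2)"
    have normF: "(F has_integral P) {-1..1}" using norm[folded \<beta>_def] by (simp add: F_def P_def)
    have low: "(M * (1 - \<alpha> * ll))\<^sup>2 \<le> F t" if t: "u \<le> t" "t \<le> v" for t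
    proof -
      have ta: "a \<le> t" "t \<le> 1" using t uv ll by auto
      have "\<bar>\<phi> t - \<phi> \<eta>s\<bar> \<le> \<alpha> * M * \<bar>t - \<eta>s\<bar>" using lipM[of \<eta>s t] ta \<eta>s by auto
      also have "\<dots> \<le> \<alpha> * M * ll" using uv(4)[OF t] \<alpha>0 Mnn by (intro mult_left_mono) auto
      finally have "M * (1 - \<alpha> * ll) \<le> \<bar>\<phi> t\<bar>" unfolding M_def by (simp add: algebra_simps)
      moreover have "0 \<le> M * (1 - \<alpha> * ll)" using Mnn \<alpha>ll by simp
      ultimately have "(M * (1 - \<alpha> * ll))\<^sup>2 \<le> \<bar>\<phi> t\<bar>\<^sup>2" by (rule power_mono)
      also have "\<dots> \<le> (1 + t) powr (\<beta> - 1) * \<bar>\<phi> t\<bar>\<^sup>2"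
        using ge_one_powr_ge_zero[of "1 + t" "\<beta> - 1"] ta a0 \<beta>1 by (simp add: mult_le_cancel_right1)
      finally show ?thesis by (simp add: F_def)
    qed
    have uv1: "{u..v} \<subseteq> {-1..1}" using uv a0 by auto
    have intUV: "F integrable_on {u..v}" using integrable_on_subinterval[OF _ uv1] normF by blast
    have "integral {u..v} (\<lambda>t. (M * (1 - \<alpha> * ll))\<^sup>2) \<le> integral {u..v} F"
      by (rule integral_le[OF _ intUV]) (use low in auto)
    also have "\<dots> \<le> integral {-1..1} F"
    proof (rule integral_subset_le[OF uv1 intUV])
      show "F integrable_on {-1..1}" using normF by blast
      show "\<forall>x\<in>{-1..1}. 0 \<le> F x" by (simp add: F_def)
    qed
    also have "\<dots> = P" using normF by blast
    finally have key: "ll * (M * (1 - \<alpha> * ll))\<^sup>2 \<le> P" using uv ll by simp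
    have "(2/3)\<^sup>2 \<le> (1 - \<alpha> * ll)\<^sup>2" using \<alpha>ll by (intro power_mono) auto
    hence "ll * M\<^sup>2 * (4/9) \<le> ll * M\<^sup>2 * (1 - \<alpha> * ll)\<^sup>2" using ll by (intro mult_left_mono) (auto simp: power2_eq_square)
    also have "\<dots> = ll * (M * (1 - \<alpha> * ll))\<^sup>2" by (simp add: power_mult_distrib)
    finally have key2: "ll * M\<^sup>2 * (4/9) \<le> P" using key by linarith
    have cond: "1 \<le> 12 * ll * (\<beta> - 1) * \<alpha>"
    proof (cases "1 / (2 * \<beta>) \<le> 1 / (3 * \<alpha>)")
      case True
      hence llv: "ll = 1 / (2 * \<beta>)" by (simp add: ll_def)
      have e: "12 * ll * (\<beta> - 1) * \<alpha> = (6 * (\<beta> - 1) * \<alpha>) / \<beta>" unfolding llv using \<beta>1 by (simp add: field_simps)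
      have "\<beta> \<le> 6 * (\<beta> - 1) * \<alpha>"
      proof -
        have c0: "0 \<le> 6 * (\<beta> - 1)" using \<beta>32 by simp
        have "6 * (\<beta> - 1) * (1/2) \<le> 6 * (\<beta> - 1) * \<alpha>" using mult_left_mono[OF \<alpha>h c0] .
        hence "3 * (\<beta> - 1) \<le> 6 * (\<beta> - 1) * \<alpha>" by simp
        moreover have "\<beta> \<le> 3 * (\<beta> - 1)" using \<beta>32 by simp
        ultimately show ?thesis by (rule order_trans[rotated])
      qed
      thus ?thesis using \<beta>1 e by (simp add: le_divide_eq)
    next
      case False
      hence llv: "ll = 1 / (3 * \<alpha>)" by (simp add: ll_def)
      have "12 * ll * (\<beta> - 1) * \<alpha> = 4 * (\<beta> - 1)" unfolding llv using \<alpha>0 by (simp add: field_simps)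
      thus ?thesis using \<beta>32 by simp
    qed
    have "M\<^sup>2 \<le> M\<^sup>2 * (12 * ll * (\<beta> - 1) * \<alpha>)" using cond by (simp add: mult_le_cancel_left1)
    also have "\<dots> = 27 * (\<beta> - 1) * \<alpha> * (ll * M\<^sup>2 * (4/9))" by (simp add: algebra_simps)
    also have "\<dots> \<le> 27 * (\<beta> - 1) * \<alpha> * P" using key2 \<alpha>0 \<beta>32 by (intro mult_left_mono) auto
    finally have "M\<^sup>2 \<le> R\<^sup>2" using R2 by simp
    thus ?thesis using R0 by (rule power2_le_imp_le)
  qed
  show ?thesis
  proof
    fix \<eta> assume "\<eta> \<in> {(2 * real m + real d - 2) / (2 * real m + real d)..1}"
    hence "a \<le> \<eta>" "\<eta> \<le> 1" using a_eq by auto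
    hence "\<bar>\<phi> \<eta>\<bar> \<le> R" using Mb MR by fastforce
    thus "\<bar>\<phi> \<eta>\<bar> \<le> (3 * sqrt 3 / 2) * sqrt (2 powr (real m + real d / 2 + 1) * (real m + real d / 2 - 1)) * \<alpha> powr (1/2)"
      by (simp add: R_def \<beta>_def)
  qed
qed

end
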